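(* Let $\alpha,\beta\in\mathbb R_\flat$ with $\alpha<\beta$. Then $\ell_\alpha(\mathbb N_0^d)\subseteq\ell_\beta(\mathbb N_0^d)$ and $\ell_{0,\alpha}(\mathbb N_0^d)\subseteq\ell_{0,\beta}(\mathbb N_0^d)$.
   Context: $\mathbb R_\flat=\mathbb R_+\cup\{\flat_\sigma:\sigma>0\}$, $\mathbb R_+=(0,\infty)$, ordered by the usual order on $\mathbb R_+$ together with: $x_1<\flat_{\sigma_1}<\flat_{\sigma_2}<x_2$ whenever $\sigma_1<\sigma_2$ and $x_1<1/2\le x_2$, $x_1,x_2\in\mathbb R_+$. For $n\in\mathbb N_0^d$, $|n|=\sum n_j$, $n!=\prod n_j!$. Weights: for $\alpha\in\mathbb R_+$, $h>0$, $\vartheta_{h,\alpha}(n)=e^{h|n|^{1/(2\alpha)}}$; for $\alpha=\flat_\sigma$, $\vartheta_{h,\flat_\sigma}(n)=h^{|n|}n!^{1/(2\sigma)}$. $\ell^\infty_{[\vartheta_{h,\alpha}]}(\mathbb N_0^d)$ is the space of complex sequences with $\sup_n|a_n|\vartheta_{h,\alpha}(n)<\infty$; $\ell_\alpha(\mathbb N_0^d)=\bigcup_{h>0}\ell^\infty_{[\vartheta_{h,\alpha}]}(\mathbb N_0^d)$ and $\ell_{0,\alpha}(\mathbb N_0^d)=\bigcap_{h>0}\ell^\infty_{[\vartheta_{h,\alpha}]}(\mathbb N_0^d)$, for every $\alpha\in\mathbb R_\flat$. *)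

theory Defs
  imports Complex_Main
begin

text \<open>The extended index set R_flat = R_+ union {flat_sigma : sigma > 0}.
  Pos x stands for x in R_+, Flat s stands for flat_s.  Validity (x > 0, s > 0)
  is a separate predicate.\<close>
datatype rflat = Pos real | Flat real

definition rflat_valid :: "rflat \<Rightarrow> bool" where
  "rflat_valid a = (case a of Pos x \<Rightarrow> x > 0 | Flat s \<Rightarrow> s > 0)"

fun rflat_less :: "rflat \<Rightarrow> rflat \<Rightarrow> bool" where
  "rflat_less (Pos x) (Pos y) = (x < y)"
| "rflat_less (Pos x) (Flat s) = (x < 1/2)"
| "rflat_less (Flat s) (Pos x) = (1/2 \<le> x)"
| "rflat_less (Flat s) (Flat t) = (s < t)"

text \<open>Multi-indices n in N_0^d are functions 'd \<Rightarrow> nat on a finite index type 'd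
  with CARD('d) = d.\<close>
definition mabs :: "('d::finite \<Rightarrow> nat) \<Rightarrow> nat" where
  "mabs n = (\<Sum>j\<in>UNIV. n j)"

definition mfact :: "('d::finite \<Rightarrow> nat) \<Rightarrow> nat" where
  "mfact n = (\<Prod>j\<in>UNIV. fact (n j))"

definition weight :: "real \<Rightarrow> rflat \<Rightarrow> ('d::finite \<Rightarrow> nat) \<Rightarrow> real" where
  "weight h a n = (case a of
      Pos x \<Rightarrow> exp (h * real (mabs n) powr (1 / (2 * x)))
    | Flat s \<Rightarrow> h ^ mabs n * real (mfact n) powr (1 / (2 * s)))"

definition linf_weighted :: "(('d::finite \<Rightarrow> nat) \<Rightarrow> real) \<Rightarrow> (('d \<Rightarrow> nat) \<Rightarrow> complex) set" where
  "linf_weighted w = {a. \<exists>C. \<forall>n. norm (a n) * w n \<le> C}"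

definition ell :: "rflat \<Rightarrow> (('d::finite \<Rightarrow> nat) \<Rightarrow> complex) set" where
  "ell a = (\<Union>h\<in>{h. h > 0}. linf_weighted (weight h a))"

definition ell0 :: "rflat \<Rightarrow> (('d::finite \<Rightarrow> nat) \<Rightarrow> complex) set" where
  "ell0 a = (\<Inter>h\<in>{h. h > 0}. linf_weighted (weight h a))"

end

theory Submission
  imports Defs
begin

lemma pow_fact_le_exp:
  fixes x :: real assumes "x \<ge> 0"
  shows "x ^ k / fact k \<le> exp x"
proof -
  have s: "(\<lambda>n. x ^ n / fact n) sums exp x"
    using exp_converges[of x] by (simp add: divide_inverse mult.commute)
  have "(\<Sum>n\<in>{k}. x ^ n / fact n) \<le> (\<Sum>n. x ^ n / fact n)"
    by (rule sum_le_suminf) (use s assms in \<open>auto simp: sums_iff\<close>)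
  thus ?thesis using s by (simp add: sums_iff)
qed

lemma pow_le_fact_powr:
  fixes c r :: real assumes "c > 0" "r > 0"
  shows "\<exists>K\<ge>0. \<forall>k. c ^ k \<le> K * fact k powr r"
proof -
  define c' where "c' = c powr (1/r)"
  have c'pos: "c' > 0" using assms by (simp add: c'_def)
  have cc: "c' powr r = c" using assms by (simp add: c'_def powr_powr)
  show ?thesis
  proof (intro exI[of _ "exp c' powr r"] conjI allI)
    fix k
    have "c' ^ k \<le> exp c' * fact k"
      using pow_fact_le_exp[of c' k] c'pos by (simp add: divide_simps)
    hence "(c' ^ k) powr r \<le> (exp c' * fact k) powr r"
      using c'pos assms by (intro powr_mono2) auto
    moreover have "(c' ^ k) powr r = c ^ k"
      using c'pos cc by (simp add: powr_realpow[symmetric] powr_powr mult.commute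
          flip: powr_powr) (metis powr_powr mult.commute powr_realpow c'pos
          powr_gt_zero less_irrefl)
    ultimately show "c ^ k \<le> exp c' powr r * fact k powr r"
      by (simp add: powr_mult)
  qed simp
qed

lemma mpow_le_mfact_powr:
  fixes c r :: real assumes "c > 0" "r > 0"
  shows "\<exists>K\<ge>0. \<forall>n::'d::finite \<Rightarrow> nat. c ^ mabs n \<le> K * real (mfact n) powr r"
proof -
  obtain K where K: "K \<ge> 0" "\<And>k. c ^ k \<le> K * fact k powr r"
    using pow_le_fact_powr[OF assms] by blast
  define D where "D = card (UNIV :: 'd set)"
  show ?thesis
  proof (intro exI[of _ "K ^ D"] conjI allI)
    fix n :: "'d \<Rightarrow> nat"
    have "c ^ mabs n = (\<Prod>j\<in>UNIV. c ^ n j)" by (simp add: mabs_def power_sum)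
    also have "\<dots> \<le> (\<Prod>j\<in>UNIV. K * fact (n j) powr r)"
      using K assms by (intro prod_mono) auto
    also have "\<dots> = K ^ D * (\<Prod>j\<in>UNIV. fact (n j) powr r)"
      by (simp add: prod.distrib D_def)
    also have "(\<Prod>j\<in>UNIV. (fact (n j)::real) powr r) = real (mfact n) powr r"
      by (simp add: mfact_def prod_powr_distrib of_nat_prod)
    finally show "c ^ mabs n \<le> K ^ D * real (mfact n) powr r" .
  qed (use K in simp)
qed

lemma case_flat_pos:
  assumes "s > 0" "y \<ge> 1/2" "h > 0" "h' > 0"
  shows "\<exists>K\<ge>0. \<forall>n::'d::finite \<Rightarrow> nat. weight h (Pos y) n \<le> K * weight h' (Flat s) n"
proof -
  define c where "c = exp h / h'"
  have "c > 0" using assms by (simp add: c_def)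
  then obtain K where K: "K \<ge> 0" "\<And>n::'d \<Rightarrow> nat. c ^ mabs n \<le> K * real (mfact n) powr (1 / (2 * s))"
    using mpow_le_mfact_powr[of c "1 / (2 * s)"] assms by auto
  show ?thesis
  proof (intro exI[of _ "exp h * K"] conjI allI)
    fix n :: "'d \<Rightarrow> nat"
    define m where "m = real (mabs n)"
    have q: "1 / (2 * y) \<le> 1" "1 / (2 * y) > 0" using assms by (auto simp: field_simps)
    have "m powr (1 / (2 * y)) \<le> 1 + m"
    proof (cases "m \<ge> 1")
      case True
      hence "m powr (1 / (2 * y)) \<le> m powr 1" using q by (intro powr_mono) auto
      thus ?thesis using True by simp
    next
      case False
      hence "m = 0" by (auto simp: m_def)
      thus ?thesis by simp
    qed
    hence "exp (h * m powr (1 / (2 * y))) \<le> exp (h * (1 + m))"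
      using assms by simp
    also have "\<dots> = exp h * exp h ^ mabs n"
      by (simp add: m_def distrib_left exp_add exp_of_nat_mult[symmetric] mult.commute)
    also have "exp h ^ mabs n = h' ^ mabs n * c ^ mabs n"
      using assms by (simp add: c_def power_divide)
    also have "exp h * (h' ^ mabs n * c ^ mabs n) \<le> exp h * (h' ^ mabs n * (K * real (mfact n) powr (1 / (2 * s))))"
      using K(2)[of n] assms by (intro mult_left_mono) auto
    finally show "weight h (Pos y) n \<le> exp h * K * weight h' (Flat s) n"
      by (simp add: weight_def m_def mult_ac)
  qed (use K in simp)
qed

lemma young_like:
  fixes A a p hh :: real
  assumes "A \<ge> 0" "0 < a" "a < p" "hh > 0"
  shows "\<exists>C\<ge>0. \<forall>y\<ge>0. A * y powr a \<le> C + hh * y powr p"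
proof -
  define M where "M = (A / hh) powr (1 / (p - a))"
  have M0: "M \<ge> 0" by (simp add: M_def)
  have MM: "M powr (p - a) = A / hh"
    using assms by (simp add: M_def powr_powr)
  show ?thesis
  proof (intro exI[of _ "A * M powr a"] conjI allI impI)
    fix y :: real assume y: "y \<ge> 0"
    show "A * y powr a \<le> A * M powr a + hh * y powr p"
    proof (cases "y \<le> M")
      case True
      hence "A * y powr a \<le> A * M powr a"
        using assms y by (intro mult_left_mono powr_mono2) auto
      moreover have "hh * y powr p \<ge> 0" using assms by simp
      ultimately show ?thesis by linarith
    next
      case False
      hence "y powr (p - a) \<ge> M powr (p - a)"
        using assms M0 by (intro powr_mono2) auto
      hence "y powr (p - a) \<ge> A / hh" using MM by simp
      hence "hh * y powr (p - a) \<ge> A" using assms by (simp add: field_simps)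
      hence "hh * y powr (p - a) * y powr a \<ge> A * y powr a"
        by (intro mult_right_mono) auto
      moreover have "y powr (p - a) * y powr a = y powr p"
        by (simp add: powr_add[symmetric])
      moreover have "A * M powr a \<ge> 0" using assms by simp
      ultimately show ?thesis by (simp add: mult.assoc)
    qed
  qed (use assms in simp)
qed

lemma mfact_le: "mfact n \<le> mabs n ^ mabs n"
proof -
  have "mfact n \<le> (\<Prod>j\<in>UNIV. n j ^ n j)"
    unfolding mfact_def by (intro prod_mono) (auto, metis fact_le_power of_nat_id)
  also have "\<dots> \<le> (\<Prod>j\<in>UNIV. mabs n ^ n j)"
  proof (intro prod_mono conjI)
    fix j show "n j ^ n j \<le> mabs n ^ n j"
      unfolding mabs_def by (intro power_mono member_le_sum) auto
  qed auto
  also have "\<dots> = mabs n ^ mabs n" by (simp add: mabs_def power_sum)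
  finally show ?thesis .
qed

lemma oned_bound:
  fixes h h' r p :: real
  assumes "h > 0" "h' > 0" "r > 0" "p > 1"
  shows "\<exists>C. \<forall>m::nat. h ^ m * real (m ^ m) powr r \<le> exp C * exp (h' * real m powr p)"
proof -
  define e where "e = (p - 1) / 2"
  define a where "a = 1 + e"
  define A where "A = \<bar>ln h\<bar> + r / e"
  have e: "e > 0" using assms by (simp add: e_def)
  have A0: "A \<ge> 0" using e assms by (simp add: A_def)
  have ap: "0 < a" "a < p" using e assms unfolding a_def e_def by (simp_all add: field_simps)
  obtain C where C: "C \<ge> 0" "\<And>y. y \<ge> 0 \<Longrightarrow> A * y powr a \<le> C + h' * y powr p"
    using young_like[OF A0 ap assms(2)] by blast
  show ?thesis
  proof (intro exI[of _ C] allI)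
    fix m :: nat
    have E: "real m * ln h + r * (real m * ln (real m)) \<le> A * real m powr a"
    proof (cases "m = 0")
      case True thus ?thesis by simp
    next
      case False
      hence m1: "real m \<ge> 1" by simp
      have "real m \<le> real m powr a"
        using m1 e by (metis a_def less_add_same_cancel1 less_le powr_mono powr_one_gt_zero_iff
            powr_one zero_le_one order_trans linorder_not_le)
      hence t1: "real m * ln h \<le> \<bar>ln h\<bar> * real m powr a"
        by (smt (verit, best) abs_ge_self abs_ge_zero mult.commute mult_mono of_nat_0_le_iff)
      have "ln (real m powr e) \<le> real m powr e - 1"
        using m1 by (intro ln_le_minus_one) auto
      hence "e * ln (real m) \<le> real m powr e" using m1 by (simp add: ln_powr)
      hence "ln (real m) \<le> real m powr e / e" using e by (simp add: field_simps)
      hence "real m * ln (real m) \<le> real m * (real m powr e / e)"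
        by (intro mult_left_mono) auto
      also have "\<dots> = real m powr a / e"
        using m1 by (simp add: a_def powr_add)
      finally have "r * (real m * ln (real m)) \<le> r * (real m powr a / e)"
        using assms by (intro mult_left_mono) auto
      with t1 show ?thesis by (simp add: A_def algebra_simps)
    qed
    have "h ^ m = exp (real m * ln h)"
      using assms by (simp add: exp_of_nat_mult)
    moreover have "real (m ^ m) powr r = exp (r * (real m * ln (real m)))"
    proof (cases "m = 0")
      case True thus ?thesis by simp
    next
      case False thus ?thesis by (simp add: powr_def ln_realpow)
    qed
    ultimately have "h ^ m * real (m ^ m) powr r = exp (real m * ln h + r * (real m * ln (real m)))"
      by (simp add: exp_add)
    also have "\<dots> \<le> exp (C + h' * real m powr p)"
      using E C(2)[of "real m"] by simp
    finally show "h ^ m * real (m ^ m) powr r \<le> exp C * exp (h' * real m powr p)"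
      by (simp add: exp_add)
  qed
qed

lemma case_pos_flat:
  assumes "s > 0" "x > 0" "x < 1/2" "h > 0" "h' > 0"
  shows "\<exists>K\<ge>0. \<forall>n::'d::finite \<Rightarrow> nat. weight h (Flat s) n \<le> K * weight h' (Pos x) n"
proof -
  have p: "1 / (2 * x) > 1" using assms by (simp add: field_simps)
  obtain C where C: "\<And>m::nat. h ^ m * real (m ^ m) powr (1 / (2 * s)) \<le> exp C * exp (h' * real m powr (1 / (2 * x)))"
    using oned_bound[OF assms(4,5) _ p, of "1 / (2 * s)"] assms by auto
  show ?thesis
  proof (intro exI[of _ "exp C"] conjI allI)
    fix n :: "'d \<Rightarrow> nat"
    have f1: "mfact n \<ge> 1" unfolding mfact_def
      by (metis fact_ge_1 prod_ge_1)
    have "real (mfact n) powr (1 / (2 * s)) \<le> real (mabs n ^ mabs n) powr (1 / (2 * s))"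
      using f1 mfact_le[of n] assms by (intro powr_mono2) auto
    hence "h ^ mabs n * real (mfact n) powr (1 / (2 * s)) \<le> h ^ mabs n * real (mabs n ^ mabs n) powr (1 / (2 * s))"
      using assms by (intro mult_left_mono) auto
    also have "\<dots> \<le> exp C * exp (h' * real (mabs n) powr (1 / (2 * x)))" by (rule C)
    finally show "weight h (Flat s) n \<le> exp C * weight h' (Pos x) n"
      by (simp add: weight_def)
  qed simp
qed

lemma linf_mono:
  assumes "K \<ge> 0" "\<And>n. w2 n \<le> K * w1 n" "a \<in> linf_weighted w1"
  shows "a \<in> linf_weighted w2"
proof -
  obtain C where C: "\<And>n. norm (a n) * w1 n \<le> C" using assms(3) by (auto simp: linf_weighted_def)
  have "norm (a n) * w2 n \<le> K * C" for n
  proof -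
    have "norm (a n) * w2 n \<le> norm (a n) * (K * w1 n)"
      using assms(2) by (intro mult_left_mono) auto
    also have "\<dots> = K * (norm (a n) * w1 n)" by simp
    also have "\<dots> \<le> K * C" using C assms(1) by (intro mult_left_mono) auto
    finally show ?thesis .
  qed
  thus ?thesis by (auto simp: linf_weighted_def)
qed

definition dom_w :: "rflat \<Rightarrow> rflat \<Rightarrow> real \<Rightarrow> real \<Rightarrow> ('d::finite) itself \<Rightarrow> bool" where
  "dom_w \<alpha> \<beta> h' h _ = (\<exists>K\<ge>0. \<forall>n::'d \<Rightarrow> nat. weight h \<beta> n \<le> K * weight h' \<alpha> n)"

lemma dom_cases:
  assumes "rflat_valid \<alpha>" "rflat_valid \<beta>" "rflat_less \<alpha> \<beta>"
  shows "(\<forall>h'>0. \<exists>h>0. dom_w \<alpha> \<beta> h' h TYPE('d::finite))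
       \<and> (\<forall>h>0. \<exists>h'>0. dom_w \<alpha> \<beta> h' h TYPE('d))"
proof (cases \<alpha>)
  case (Pos x)
  show ?thesis
  proof (cases \<beta>)
    case (Pos y)
    have "dom_w \<alpha> \<beta> h h TYPE('d)" if "h > 0" for h
      unfolding dom_w_def
    proof (intro exI[of _ 1] conjI allI)
      fix n :: "'d \<Rightarrow> nat"
      have "real (mabs n) powr (1 / (2 * y)) \<le> real (mabs n) powr (1 / (2 * x))"
      proof (cases "mabs n = 0")
        case False
        thus ?thesis using assms \<open>\<alpha> = Pos x\<close> \<open>\<beta> = Pos y\<close>
          by (intro powr_mono) (auto simp: rflat_valid_def field_simps)
      qed simp
      thus "weight h \<beta> n \<le> 1 * weight h \<alpha> n"
        using that \<open>\<alpha> = Pos x\<close> \<open>\<beta> = Pos y\<close> by (simp add: weight_def)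
    qed simp
    thus ?thesis by blast
  next
    case (Flat s)
    have "dom_w \<alpha> \<beta> h' h TYPE('d)" if "h > 0" "h' > 0" for h h'
      using case_pos_flat[of s x h h'] assms that Pos Flat
      by (auto simp: dom_w_def rflat_valid_def)
    thus ?thesis by (meson zero_less_one)
  qed
next
  case (Flat s)
  show ?thesis
  proof (cases \<beta>)
    case (Pos y)
    have "dom_w \<alpha> \<beta> h' h TYPE('d)" if "h > 0" "h' > 0" for h h'
      using case_flat_pos[of s y h h'] assms that Pos Flat
      by (auto simp: dom_w_def rflat_valid_def)
    thus ?thesis by (meson zero_less_one)
  next
    case (Flat t)
    have "dom_w \<alpha> \<beta> h h TYPE('d)" if "h > 0" for h
      unfolding dom_w_def
    proof (intro exI[of _ 1] conjI allI)
      fix n :: "'d \<Rightarrow> nat"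
      have f1: "real (mfact n) \<ge> 1" unfolding mfact_def
        by (metis fact_ge_1 prod_ge_1 of_nat_1 of_nat_le_iff)
      have "real (mfact n) powr (1 / (2 * t)) \<le> real (mfact n) powr (1 / (2 * s))"
        using assms \<open>\<alpha> = Flat s\<close> \<open>\<beta> = Flat t\<close> f1
        by (intro powr_mono) (auto simp: rflat_valid_def field_simps)
      thus "weight h \<beta> n \<le> 1 * weight h \<alpha> n"
        using that \<open>\<alpha> = Flat s\<close> \<open>\<beta> = Flat t\<close> by (simp add: weight_def mult_left_mono)
    qed simp
    thus ?thesis by blast
  qed
qed

theorem lemma6p1:
  assumes "rflat_valid \<alpha>" and "rflat_valid \<beta>" and "rflat_less \<alpha> \<beta>"
  shows "(ell \<alpha> :: (('d::finite \<Rightarrow> nat) \<Rightarrow> complex) set) \<subseteq> ell \<beta>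
     \<and> (ell0 \<alpha> :: (('d::finite \<Rightarrow> nat) \<Rightarrow> complex) set) \<subseteq> ell0 \<beta>"
proof
  note D = dom_cases[OF assms, where 'd = 'd]
  show "(ell \<alpha> :: (('d::finite \<Rightarrow> nat) \<Rightarrow> complex) set) \<subseteq> ell \<beta>"
  proof
    fix a :: "('d \<Rightarrow> nat) \<Rightarrow> complex" assume "a \<in> ell \<alpha>"
    then obtain h' where h': "h' > 0" "a \<in> linf_weighted (weight h' \<alpha>)" by (auto simp: ell_def)
    from D h' obtain h where "h > 0" "dom_w \<alpha> \<beta> h' h TYPE('d)" by blast
    moreover then obtain K where "K \<ge> 0" "\<And>n::'d \<Rightarrow> nat. weight h \<beta> n \<le> K * weight h' \<alpha> n"
      by (auto simp: dom_w_def)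
    ultimately have "a \<in> linf_weighted (weight h \<beta>)" using h' linf_mono by blast
    thus "a \<in> ell \<beta>" using \<open>h > 0\<close> by (auto simp: ell_def)
  qed
  show "(ell0 \<alpha> :: (('d::finite \<Rightarrow> nat) \<Rightarrow> complex) set) \<subseteq> ell0 \<beta>"
  proof
    fix a :: "('d \<Rightarrow> nat) \<Rightarrow> complex" assume a: "a \<in> ell0 \<alpha>"
    have "a \<in> linf_weighted (weight h \<beta>)" if "h > 0" for h
    proof -
      from D that obtain h' where "h' > 0" "dom_w \<alpha> \<beta> h' h TYPE('d)" by blast
      moreover then obtain K where "K \<ge> 0" "\<And>n::'d \<Rightarrow> nat. weight h \<beta> n \<le> K * weight h' \<alpha> n"
        by (auto simp: dom_w_def)
      moreover have "a \<in> linf_weighted (weight h' \<alpha>)" using a \<open>h' > 0\<close> by (auto simp: ell0_def)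
      ultimately show ?thesis using linf_mono by blast
    qed
    thus "a \<in> ell0 \<beta>" by (auto simp: ell0_def)
  qed
qed

end
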